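(* Let $\mathcal{H}$ be the positive orthant of the unit sphere $\mathbf{S}^\infty$ of $L^2(\mathbb{R}^n)$ (i.e., the set of a.e. nonnegative functions of unit $L^2$ norm), equipped with $d_S$. Let $\mathbf{m}_{k-1}, \mathbf{x}_k \in \mathcal{H}$ with $\langle \mathbf{m}_{k-1}, \mathbf{x}_k\rangle > 0$ and $\mathbf{m}_{k-1} \neq \mathbf{x}_k$, and let $w_k \in [0,1)$. Set $\theta = \arccos(\langle \mathbf{m}_{k-1}, \mathbf{x}_k\rangle) \in (0, \pi/2)$, $c = \tan\theta$, and $$ \alpha = \arctan\!\left( \frac{-1 + \sqrt{4c^2(1-w_k) - 4c^2(1-w_k)^2 + 1}}{2c(1-w_k)} \right). $$ Then the minimizer over $\mathbf{x} \in \mathcal{H}$ of $$ w_k\, d_S^2(\mathbf{x}_k, \mathbf{x}) + (1-w_k)\, d_S^2(\mathbf{m}_{k-1}, \mathbf{x}) $$ is $$ \mathbf{m}_k = \frac{\sin(\theta - \alpha)}{\sin\theta}\, \mathbf{m}_{k-1} + \frac{\sin\alpha}{\sin\theta}\, \mathbf{x}_k. $$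
   Context: $\mathbf{S}^\infty$ denotes the unit sphere of the Hilbert space $L^2(\mathbb{R}^n)$ with inner product $\langle\cdot,\cdot\rangle$. For $\widetilde f, \widetilde g \in \mathbf{S}^\infty$ with $\langle \widetilde f, \widetilde g\rangle \neq 0$, $d_S(\widetilde f, \widetilde g) = \sqrt{-\log \langle \widetilde f, \widetilde g\rangle^2}$ (and $d_S = +\infty$ if the inner product is $0$). *)

theory Defs
  imports "HOL-Analysis.Analysis"
begin

text \<open>Elements of L^2(R^n) are represented by real-valued functions on real^'n;
  two representatives denote the same element iff they agree almost everywhere
  w.r.t. Lebesgue (Borel) measure.\<close>

definition L2inner :: "(real^'n \<Rightarrow> real) \<Rightarrow> (real^'n \<Rightarrow> real) \<Rightarrow> real" where
  "L2inner f g = (LINT x|lborel. f x * g x)"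

definition L2 :: "(real^'n \<Rightarrow> real) set" where
  "L2 = {f. f \<in> borel_measurable lborel \<and> integrable lborel (\<lambda>x. (f x)\<^sup>2)}"

definition posorth :: "(real^'n \<Rightarrow> real) set" where
  "posorth = {f. f \<in> L2 \<and> (AE x in lborel. 0 \<le> f x) \<and> L2inner f f = 1}"

definition dS :: "(real^'n \<Rightarrow> real) \<Rightarrow> (real^'n \<Rightarrow> real) \<Rightarrow> ereal" where
  "dS f g = (if L2inner f g = 0 then \<infinity> else ereal (sqrt (- ln ((L2inner f g)\<^sup>2))))"

end

theory Submission
  imports Defs
begin


lemma L2_prod_integrable:
  assumes "f \<in> L2" "g \<in> L2"
  shows "integrable lborel (\<lambda>x. f x * g x)"
proof -
  have i: "integrable lborel (\<lambda>x. (f x)\<^sup>2 + (g x)\<^sup>2)" using assms unfolding L2_def by auto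
  show ?thesis
  proof (rule Bochner_Integration.integrable_bound[OF i])
    show "(\<lambda>x. f x * g x) \<in> borel_measurable lborel" using assms unfolding L2_def by auto
    show "AE x in lborel. norm (f x * g x) \<le> norm ((f x)\<^sup>2 + (g x)\<^sup>2)"
    proof (rule AE_I2)
      fix x
      have "0 \<le> (\<bar>f x\<bar> - \<bar>g x\<bar>)\<^sup>2" by simp
      hence "2*\<bar>f x\<bar>*\<bar>g x\<bar> \<le> (f x)\<^sup>2 + (g x)\<^sup>2"
        by (simp add: power2_eq_square algebra_simps)
      moreover have "\<bar>f x\<bar>*\<bar>g x\<bar> \<ge> 0" by simp
      ultimately have "\<bar>f x\<bar>*\<bar>g x\<bar> \<le> (f x)\<^sup>2 + (g x)\<^sup>2" by linarith
      then show "norm (f x * g x) \<le> norm ((f x)\<^sup>2 + (g x)\<^sup>2)"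
        by (simp add: abs_mult)
    qed
  qed
qed

lemma L2_lin:
  assumes "f \<in> L2" "g \<in> L2"
  shows "(\<lambda>x. r * f x + q * g x) \<in> L2"
proof -
  have e: "(\<lambda>x. (r*f x + q*g x)\<^sup>2) = (\<lambda>x. r\<^sup>2 * (f x)\<^sup>2 + q\<^sup>2 * (g x)\<^sup>2 + (2*r*q) * (f x * g x))"
    by (rule ext) (simp add: power2_eq_square algebra_simps)
  have "integrable lborel (\<lambda>x. (r*f x + q*g x)\<^sup>2)" unfolding e
    using assms L2_prod_integrable[OF assms] unfolding L2_def by auto
  then show ?thesis using assms unfolding L2_def by auto
qed

lemma L2inner_lin:
  assumes "f \<in> L2" "g \<in> L2" "h \<in> L2"
  shows "L2inner (\<lambda>x. r * f x + q * g x) h = r * L2inner f h + q * L2inner g h"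
proof -
  have e: "(\<lambda>x. (r*f x + q*g x) * h x) = (\<lambda>x. r*(f x * h x) + q*(g x * h x))"
    by (rule ext) (simp add: algebra_simps)
  show ?thesis unfolding L2inner_def e
    using L2_prod_integrable[OF assms(1,3)] L2_prod_integrable[OF assms(2,3)] by simp
qed

lemma L2inner_sym: "L2inner f g = L2inner g f"
  unfolding L2inner_def by (simp add: mult.commute)

lemma L2inner_nonneg:
  assumes "AE x in lborel. 0 \<le> f x" "AE x in lborel. 0 \<le> g x"
  shows "0 \<le> L2inner f g"
  unfolding L2inner_def using assms by (auto intro!: integral_nonneg_AE)

lemma L2_unit_CS:
  assumes f: "f \<in> L2" and g: "g \<in> L2" and nf: "L2inner f f = 1" and ng: "L2inner g g = 1"
  shows "L2inner f g \<le> 1 \<and> (L2inner f g = 1 \<longrightarrow> (AE x in lborel. f x = g x))"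
proof -
  define h where "h = (\<lambda>x. 1 * f x + (-1) * g x)"
  have hL: "h \<in> L2" unfolding h_def by (rule L2_lin[OF f g])
  have "L2inner h h = L2inner f h - L2inner g h"
    unfolding h_def using L2inner_lin[OF f g hL[unfolded h_def], of 1 "-1"] by simp
  also have "L2inner f h = L2inner h f" by (rule L2inner_sym)
  also have "L2inner g h = L2inner h g" by (rule L2inner_sym)
  also have "L2inner h f = 1 - L2inner g f" unfolding h_def using L2inner_lin[OF f g f, of 1 "-1"] nf by simp
  also have "L2inner h g = L2inner f g - 1" unfolding h_def using L2inner_lin[OF f g g, of 1 "-1"] ng by simp
  finally have hh: "L2inner h h = 2 - 2 * L2inner f g" using L2inner_sym[of g f] by simp
  have nn: "0 \<le> L2inner h h" unfolding L2inner_def by (auto intro!: integral_nonneg_AE)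
  have "L2inner f g = 1 \<longrightarrow> (AE x in lborel. f x = g x)"
  proof
    assume "L2inner f g = 1"
    hence "L2inner h h = 0" using hh by simp
    hence "AE x in lborel. h x * h x = 0" unfolding L2inner_def
      using integral_nonneg_eq_0_iff_AE[OF L2_prod_integrable[OF hL hL]] by simp
    thus "AE x in lborel. f x = g x" by eventually_elim (simp add: h_def)
  qed
  thus ?thesis using hh nn by simp
qed



lemma alg_facts:
  fixes S p ca sa t w :: real
  assumes S: "S > 0" and p: "p > 0" and Sp: "S\<^sup>2 + p\<^sup>2 = 1" and ca: "ca > 0"
    and sa: "sa = t * ca" and cat: "ca\<^sup>2 * (1 + t\<^sup>2) = 1" and t: "t \<ge> 0" and tp: "t * p < S"
    and rel: "(1 - w) * S * t\<^sup>2 + t * p = S * w" and w: "0 \<le> w" "w < 1"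
  defines "s1 \<equiv> (S * ca - p * sa) / S" and "s2 \<equiv> sa / S"
  shows "s1 \<ge> 0" "s2 \<ge> 0" "s1 + s2 * p > 0" "s1 * p + s2 > 0"
    "s1 * (s1 + s2 * p) + s2 * (s1 * p + s2) = 1"
    "s1 = (1 - w) / (s1 + s2 * p)" "s2 = w / (s1 * p + s2)"
proof -
  have A: "s1 + s2 * p = ca" unfolding s1_def s2_def using S by (simp add: field_simps)
  have B: "s1 * p + s2 = p * ca + S * sa"
  proof -
    have "s1 * p + s2 = (S*ca*p + sa*(1 - p\<^sup>2)) / S" unfolding s1_def s2_def using S
      by (simp add: field_simps power2_eq_square)
    also have "1 - p\<^sup>2 = S\<^sup>2" using Sp by simp
    also have "(S*ca*p + sa*S\<^sup>2) / S = p * ca + S * sa" using S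
      by (simp add: field_simps power2_eq_square)
    finally show ?thesis .
  qed
  have "S * ca - p * sa = ca * (S - t * p)" using sa by (simp add: algebra_simps)
  moreover have "S - t*p > 0" using tp by simp
  ultimately show "s1 \<ge> 0" unfolding s1_def using S ca by simp
  show "s2 \<ge> 0" unfolding s2_def sa using S ca t by simp
  show "s1 + s2 * p > 0" using A ca by simp
  have Bp: "p * ca + S * sa > 0" using sa p ca S t by (simp add: add_pos_nonneg)
  show "s1 * p + s2 > 0" using B Bp by simp
  have "ca\<^sup>2 + sa\<^sup>2 = 1" using cat sa by (simp add: algebra_simps power_mult_distrib)
  then show "s1 * (s1 + s2 * p) + s2 * (s1 * p + s2) = 1" unfolding A B
    unfolding s1_def s2_def using S by (simp add: field_simps power2_eq_square) (metis distrib_left mult.right_neutral)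
  have "s1 * ca = 1 - w"
  proof -
    have "s1 * ca = ca\<^sup>2 * (S - t*p) / S" unfolding s1_def sa using S
      by (simp add: field_simps power2_eq_square)
    also have "S - t*p = (1-w) * S * (1 + t\<^sup>2)" using rel by (simp add: algebra_simps)
    also have "ca\<^sup>2 * ((1-w) * S * (1 + t\<^sup>2)) / S = (1 - w) * (ca\<^sup>2 * (1 + t\<^sup>2))" using S
      by (simp add: field_simps)
    also have "\<dots> = 1 - w" using cat by simp
    finally show ?thesis .
  qed
  then show "s1 = (1 - w) / (s1 + s2 * p)" unfolding A using ca by (simp add: field_simps)
  have "s2 * (p * ca + S * sa) = w"
  proof -
    have "s2 * (p * ca + S * sa) = ca\<^sup>2 * (t * p + t\<^sup>2 * S) / S" unfolding s2_def sa using S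
      by (simp add: field_simps power2_eq_square)
    also have "t * p + t\<^sup>2 * S = w * S * (1 + t\<^sup>2)" using rel by (simp add: algebra_simps)
    also have "ca\<^sup>2 * (w * S * (1 + t\<^sup>2)) / S = w * (ca\<^sup>2 * (1 + t\<^sup>2))" using S
      by (simp add: field_simps)
    also have "\<dots> = w" using cat by simp
    finally show ?thesis .
  qed
  then show "s2 = w / (s1 * p + s2)" unfolding B using Bp by (simp add: field_simps)
qed



lemma trig_facts:
  fixes p w \<theta> c \<alpha> :: real
  assumes p: "0 < p" "p < 1" and w: "0 \<le> w" "w < 1"
    and h\<theta>: "\<theta> = arccos p" and hc: "c = tan \<theta>"
    and h\<alpha>: "\<alpha> = arctan ((- 1 + sqrt (4 * c\<^sup>2 * (1 - w) - 4 * c\<^sup>2 * (1 - w)\<^sup>2 + 1))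
                        / (2 * c * (1 - w)))"
  defines "s1 \<equiv> sin (\<theta> - \<alpha>) / sin \<theta>" and "s2 \<equiv> sin \<alpha> / sin \<theta>"
  shows "s1 \<ge> 0" "s2 \<ge> 0" "s1 + s2 * p > 0" "s1 * p + s2 > 0"
    "s1 * (s1 + s2 * p) + s2 * (s1 * p + s2) = 1"
    "s1 = (1 - w) / (s1 + s2 * p)" "s2 = w / (s1 * p + s2)"
proof -
  define S where "S = sin \<theta>"
  have cth: "cos \<theta> = p" using p h\<theta> by simp
  have Sv: "S = sqrt (1 - p\<^sup>2)" unfolding S_def h\<theta> using p by (simp add: sin_arccos)
  have p2: "p\<^sup>2 < 1" using p by (simp add: power_less_one_iff abs_less_iff)
  have S0: "S > 0" unfolding Sv using p2 by simp
  have Sp: "S\<^sup>2 + p\<^sup>2 = 1" unfolding Sv using p2 by simp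
  have cv: "c = S / p" unfolding hc tan_def S_def cth by simp
  have c0: "c > 0" using cv S0 p by simp
  define D where "D = 4 * c\<^sup>2 * (1 - w) - 4 * c\<^sup>2 * (1 - w)\<^sup>2 + 1"
  have Dv: "D = 1 + 4 * c\<^sup>2 * w * (1 - w)" unfolding D_def by (simp add: power2_eq_square algebra_simps)
  have D1: "D \<ge> 1" unfolding Dv using w c0 by simp
  define t where "t = (- 1 + sqrt D) / (2 * c * (1 - w))"
  have hal: "\<alpha> = arctan t" unfolding h\<alpha> t_def D_def ..
  have sD: "sqrt D \<ge> 1" using D1 by simp
  have den: "2 * c * (1 - w) > 0" using c0 w by simp
  have t0: "t \<ge> 0" unfolding t_def using sD den by simp
  have tq: "2 * c * (1 - w) * t + 1 = sqrt D"
  proof -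
    have ne: "2 * c * (1 - w) \<noteq> 0" using den by (metis less_irrefl)
    have "2 * c * (1 - w) * t = - 1 + sqrt D" unfolding t_def using ne
      by (simp only: times_divide_eq_right) (rule nonzero_mult_div_cancel_left[OF ne])
    thus ?thesis by simp
  qed
  hence "(2 * c * (1 - w) * t + 1)\<^sup>2 = D" using D1 by simp
  hence "4 * c * (1 - w) * (c * (1 - w) * t\<^sup>2 + t) = 4 * c * (1 - w) * (c * w)"
    unfolding Dv by (simp add: power2_eq_square algebra_simps)
  hence rel0: "c * (1 - w) * t\<^sup>2 + t = c * w" using c0 w by simp
  have rel: "(1 - w) * S * t\<^sup>2 + t * p = S * w"
  proof -
    have "p * (c * (1 - w) * t\<^sup>2 + t) = p * (c * w)" using rel0 by simp
    moreover have "p * c = S" using cv p by simp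
    ultimately show ?thesis by (simp add: algebra_simps) (metis mult.assoc mult.commute)
  qed
  have tc: "t < c"
  proof -
    have e: "(1 + 2 * c\<^sup>2 * (1 - w))\<^sup>2 - D = 4 * c\<^sup>2 * (1 - w)\<^sup>2 * (1 + c\<^sup>2)"
      unfolding D_def by (simp add: power2_eq_square algebra_simps)
    have "4 * c\<^sup>2 * (1 - w)\<^sup>2 * (1 + c\<^sup>2) > 0" using c0 w by (simp add: add_pos_nonneg)
    hence "D < (1 + 2 * c\<^sup>2 * (1 - w))\<^sup>2" using e by linarith
    hence "sqrt D < sqrt ((1 + 2 * c\<^sup>2 * (1 - w))\<^sup>2)" by (rule real_sqrt_less_mono)
    also have "\<dots> = 1 + 2 * c\<^sup>2 * (1 - w)" using w by simp
    finally have "sqrt D < 1 + 2 * c\<^sup>2 * (1 - w)" .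
    hence "-1 + sqrt D < c * (2 * c * (1 - w))" by (simp add: power2_eq_square algebra_simps)
    thus ?thesis unfolding t_def using den by (simp add: divide_less_eq)
  qed
  have tp: "t * p < S" using tc p cv by (simp add: less_divide_eq)
  define ca where "ca = cos \<alpha>"
  define sa where "sa = sin \<alpha>"
  have sq: "sqrt (1 + t\<^sup>2) > 0" by (simp add: add_pos_nonneg)
  have cav: "ca = 1 / sqrt (1 + t\<^sup>2)" unfolding ca_def hal by (rule cos_arctan)
  have ca0: "ca > 0" unfolding cav using sq by simp
  have sav: "sa = t * ca" unfolding sa_def hal sin_arctan cav by simp
  have cat: "ca\<^sup>2 * (1 + t\<^sup>2) = 1" unfolding cav using sq
    using add_pos_nonneg[OF zero_less_one zero_le_power2[of t]] by (simp add: power_divide)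
  have s1v: "s1 = (S * ca - p * sa) / S" unfolding s1_def S_def ca_def sa_def sin_diff cth ..
  have s2v: "s2 = sa / S" unfolding s2_def sa_def S_def ..
  note A = alg_facts[OF S0 p(1) Sp ca0 sav cat t0 tp rel w]
  show "s1 \<ge> 0" "s2 \<ge> 0" "s1 + s2 * p > 0" "s1 * p + s2 > 0"
    "s1 * (s1 + s2 * p) + s2 * (s1 * p + s2) = 1"
    "s1 = (1 - w) / (s1 + s2 * p)" "s2 = w / (s1 * p + s2)"
    unfolding s1v s2v using A by auto
qed



lemma dS_sq_pos:
  assumes "0 < L2inner f g" "L2inner f g \<le> 1"
  shows "(dS f g)\<^sup>2 = ereal (- ln ((L2inner f g)\<^sup>2))"
proof -
  have "(L2inner f g)\<^sup>2 \<le> 1" using assms by (simp add: power_le_one)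
  hence "ln ((L2inner f g)\<^sup>2) \<le> 0" using assms by simp
  hence r0: "0 \<le> - ln ((L2inner f g)\<^sup>2)" by simp
  have "(dS f g)\<^sup>2 = (ereal (sqrt (- ln ((L2inner f g)\<^sup>2))))\<^sup>2"
    unfolding dS_def using assms by simp
  also have "\<dots> = ereal ((sqrt (- ln ((L2inner f g)\<^sup>2)))\<^sup>2)"
    by (simp only: power2_eq_square times_ereal.simps(1))
  also have "\<dots> = ereal (- ln ((L2inner f g)\<^sup>2))" using r0 by (simp only: real_sqrt_pow2)
  finally show ?thesis .
qed

lemma dS_sq_zero:
  assumes "L2inner f g = 0"
  shows "(dS f g)\<^sup>2 = \<infinity>"
proof -
  have "dS f g = \<infinity>" unfolding dS_def using assms by simp
  thus ?thesis by (simp add: power2_eq_square)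
qed

lemma key_ineq:
  fixes w a b A B :: real
  assumes w: "0 \<le> w" "w < 1" and a: "0 < a" and A: "0 < A" and B: "0 < B" and b: "0 \<le> b"
    and wb: "w = 0 \<or> 0 < b"
  shows "w * (- ln (B\<^sup>2)) + (1 - w) * (- ln (A\<^sup>2)) - 2 * (w * (b / B) + (1 - w) * (a / A) - 1)
         \<le> w * (- ln (b\<^sup>2)) + (1 - w) * (- ln (a\<^sup>2))"
proof -
  have la: "ln (a\<^sup>2) = 2 * ln a" using a by (simp add: ln_realpow)
  have lA: "ln (A\<^sup>2) = 2 * ln A" using A by (simp add: ln_realpow)
  have lB: "ln (B\<^sup>2) = 2 * ln B" using B by (simp add: ln_realpow)
  have lb: "w * ln (b\<^sup>2) = 2 * (w * ln b)" using wb b by (auto simp: ln_realpow)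
  have "ln (a / A) \<le> a / A - 1" using a A by (intro ln_le_minus_one) simp
  hence "ln a - ln A \<le> a / A - 1" using a A by (simp add: ln_div)
  hence h1: "(1 - w) * ln a - (1 - w) * ln A \<le> (1 - w) * (a / A) - (1 - w)"
    using w mult_left_mono[of "ln a - ln A" "a / A - 1" "1 - w"] by (simp add: algebra_simps)
  have h2: "w * ln b - w * ln B \<le> w * (b / B) - w"
  proof (cases "w = 0")
    case True thus ?thesis by simp
  next
    case False
    hence b0: "0 < b" using wb by simp
    have "ln (b / B) \<le> b / B - 1" using b0 B by (intro ln_le_minus_one) simp
    hence "ln b - ln B \<le> b / B - 1" using b0 B by (simp add: ln_div)
    thus ?thesis using w mult_left_mono[of "ln b - ln B" "b / B - 1" w] by (simp add: algebra_simps)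
  qed
  have e1: "w * (2 * ln B) = 2 * (w * ln B)" "(1 - w) * (2 * ln A) = 2 * ((1 - w) * ln A)"
    "(1 - w) * (2 * ln a) = 2 * ((1 - w) * ln a)" by simp_all
  show ?thesis unfolding right_diff_distrib mult_minus_right la lA lB lb e1 using h1 h2 by (smt (verit))
qed

theorem proposition3:
  fixes m xk :: "real^'n \<Rightarrow> real" and w \<theta> c \<alpha> :: real
  assumes hm: "m \<in> posorth" and hx: "xk \<in> posorth"
    and hpos: "L2inner m xk > 0"
    and hne: "\<not> (AE t in lborel. m t = xk t)"
    and hw: "0 \<le> w" "w < 1"
    and h\<theta>: "\<theta> = arccos (L2inner m xk)"
    and hc: "c = tan \<theta>"
    and h\<alpha>: "\<alpha> = arctan ((- 1 + sqrt (4 * c\<^sup>2 * (1 - w) - 4 * c\<^sup>2 * (1 - w)\<^sup>2 + 1))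
                        / (2 * c * (1 - w)))"
  shows "let mk = (\<lambda>t. sin (\<theta> - \<alpha>) / sin \<theta> * m t + sin \<alpha> / sin \<theta> * xk t);
             F = (\<lambda>x. ereal w * (dS xk x)\<^sup>2 + ereal (1 - w) * (dS m x)\<^sup>2)
         in mk \<in> posorth
            \<and> (\<forall>x \<in> posorth. F mk \<le> F x)
            \<and> (\<forall>x \<in> posorth. F x \<le> F mk \<longrightarrow> (AE t in lborel. x t = mk t))"
proof -
  have mL: "m \<in> L2" and m0: "AE t in lborel. 0 \<le> m t" and mm: "L2inner m m = 1"
    using hm unfolding posorth_def by auto
  have xL: "xk \<in> L2" and x0: "AE t in lborel. 0 \<le> xk t" and xx: "L2inner xk xk = 1"
    using hx unfolding posorth_def by auto
  define p where "p = L2inner m xk"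
  have p0: "0 < p" using hpos p_def by simp
  have p1: "p < 1"
  proof -
    have "p \<le> 1 \<and> (p = 1 \<longrightarrow> (AE x in lborel. m x = xk x))"
      unfolding p_def by (rule L2_unit_CS[OF mL xL mm xx])
    thus ?thesis using hne by auto
  qed
  have pxm: "L2inner xk m = p" unfolding p_def by (rule L2inner_sym)
  define s1 where "s1 = sin (\<theta> - \<alpha>) / sin \<theta>"
  define s2 where "s2 = sin \<alpha> / sin \<theta>"
  have h\<theta>': "\<theta> = arccos p" using h\<theta> p_def by simp
  note T = trig_facts[OF p0 p1 hw h\<theta>' hc h\<alpha>, folded s1_def s2_def]
  define A where "A = s1 + s2 * p"
  define B where "B = s1 * p + s2"
  have s10: "s1 \<ge> 0" and s20: "s2 \<ge> 0" and A0: "A > 0" and B0: "B > 0"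
    and AB1: "s1 * A + s2 * B = 1" and s1A: "s1 = (1 - w) / A" and s2B: "s2 = w / B"
    using T unfolding A_def B_def by auto
  define mk where "mk = (\<lambda>t. s1 * m t + s2 * xk t)"
  have mkL: "mk \<in> L2" unfolding mk_def by (rule L2_lin[OF mL xL])
  have ip: "\<And>h. h \<in> L2 \<Longrightarrow> L2inner mk h = s1 * L2inner m h + s2 * L2inner xk h"
    unfolding mk_def by (rule L2inner_lin[OF mL xL])
  have mA: "L2inner m mk = A"
    using L2inner_sym[of m mk] ip[OF mL] mm pxm unfolding A_def by simp
  have xB: "L2inner xk mk = B"
    using L2inner_sym[of xk mk] ip[OF xL] xx p_def unfolding B_def by simp
  have mkmk: "L2inner mk mk = 1" using ip[OF mkL] mA xB AB1 by simp
  have mk0: "AE t in lborel. 0 \<le> mk t"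
    using m0 x0 by eventually_elim (simp add: mk_def s10 s20)
  have mkP: "mk \<in> posorth" unfolding posorth_def using mkL mk0 mkmk by simp
  have A1: "A \<le> 1" using L2_unit_CS[OF mL mkL mm mkmk] mA by simp
  have B1: "B \<le> 1" using L2_unit_CS[OF xL mkL xx mkmk] xB by simp
  define Q where "Q = (\<lambda>a b. w * (- ln (b\<^sup>2)) + (1 - w) * (- ln (a\<^sup>2)))"
  define F where "F = (\<lambda>x. ereal w * (dS xk x)\<^sup>2 + ereal (1 - w) * (dS m x)\<^sup>2)"
  have FmK: "F mk = ereal (Q A B)"
    unfolding F_def Q_def using dS_sq_pos[of xk mk] dS_sq_pos[of m mk] xB mA A0 B0 A1 B1 by simp
  have main: "F x = \<infinity> \<or> (F x = ereal (Q (L2inner m x) (L2inner xk x))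
       \<and> Q A B - 2 * (L2inner mk x - 1) \<le> Q (L2inner m x) (L2inner xk x)
       \<and> L2inner mk x \<le> 1)" if xP: "x \<in> posorth" for x
  proof -
    have xL': "x \<in> L2" and xx0: "AE t in lborel. 0 \<le> x t" and xxx: "L2inner x x = 1"
      using xP unfolding posorth_def by auto
    define a where "a = L2inner m x"
    define b where "b = L2inner xk x"
    have a0: "0 \<le> a" unfolding a_def by (rule L2inner_nonneg[OF m0 xx0])
    have b0: "0 \<le> b" unfolding b_def by (rule L2inner_nonneg[OF x0 xx0])
    have a1: "a \<le> 1" unfolding a_def using L2_unit_CS[OF mL xL' mm xxx] by simp
    have b1: "b \<le> 1" unfolding b_def using L2_unit_CS[OF xL xL' xx xxx] by simp
    have L1: "L2inner mk x \<le> 1" using L2_unit_CS[OF mkL xL' mkmk xxx] by simp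
    have Lv: "L2inner mk x = w * (b / B) + (1 - w) * (a / A)"
      using ip[OF xL'] s1A s2B unfolding a_def b_def by simp
    have sqa: "(dS m x)\<^sup>2 = (if a = 0 then \<infinity> else ereal (- ln (a\<^sup>2)))"
      using dS_sq_pos[of m x] dS_sq_zero[of m x] a0 a1 unfolding a_def by auto
    have sqb: "(dS xk x)\<^sup>2 = (if b = 0 then \<infinity> else ereal (- ln (b\<^sup>2)))"
      using dS_sq_pos[of xk x] dS_sq_zero[of xk x] b0 b1 unfolding b_def by auto
    show ?thesis
    proof (cases "a = 0 \<or> (w \<noteq> 0 \<and> b = 0)")
      case True
      then have "F x = \<infinity>" unfolding F_def sqa sqb using hw by auto
      thus ?thesis by simp
    next
      case False
      hence ap: "0 < a" and wb: "w = 0 \<or> 0 < b" using a0 b0 by auto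
      have "F x = ereal (Q a b)" unfolding F_def sqa sqb Q_def using ap wb by auto
      moreover have "Q A B - 2 * (L2inner mk x - 1) \<le> Q a b"
        unfolding Lv Q_def using key_ineq[OF hw ap A0 B0 b0 wb] by simp
      ultimately show ?thesis using L1 unfolding a_def b_def by simp
    qed
  qed
  have part2: "\<forall>x \<in> posorth. F mk \<le> F x"
  proof
    fix x :: "real^'n \<Rightarrow> real" assume xP: "x \<in> posorth"
    show "F mk \<le> F x" using main[OF xP] FmK by auto
  qed
  have part3: "\<forall>x \<in> posorth. F x \<le> F mk \<longrightarrow> (AE t in lborel. x t = mk t)"
  proof (intro ballI impI)
    fix x :: "real^'n \<Rightarrow> real" assume xP: "x \<in> posorth" and le: "F x \<le> F mk"
    have xL': "x \<in> L2" and xxx: "L2inner x x = 1" using xP unfolding posorth_def by auto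
    have "L2inner mk x = 1" using main[OF xP] le FmK by auto
    hence "AE t in lborel. mk t = x t" using L2_unit_CS[OF mkL xL' mkmk xxx] by simp
    thus "AE t in lborel. x t = mk t" by eventually_elim simp
  qed
  show ?thesis unfolding Let_def using mkP part2 part3
    unfolding mk_def F_def s1_def s2_def by simp
qed

end
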